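(* In the private-signal market described in the context, suppose that for every full-support prior $\mu_0$ the limit belief satisfies $\tilde{\mu}(\omega)\in\{0,1\}$ for all $\omega\in\Omega$. Then if $\tilde{\mu}(\omega^* )=1$, $\omega^*$ is the true value of the asset.
   Context: Model (private signal case). The value $\omega$ of an asset lies in a finite set $\Omega\subset\mathbb{R}$; common full-support prior $\mu_0$. Signals lie in $\mathbb{S}\subseteq\mathbb{R}$ with conditional densities $f(s\mid\omega)$, $0<f(s\mid\omega)<\infty$. At each date $t\ge1$ one agent arrives: independently, with fixed known probability $q\in(0,1)$ a noise agent who buys, sells or does not trade with probability $1/3$ each, otherwise an informative agent who privately observes $s_t\sim f(\cdot\mid\omega)$, i.i.d. given $\omega$. Public history $H_t=(a_1,\dots,a_{t-1})$. Market makers post $ask_t,bid_t$ with zero expected profit on a buy/sell. An informative agent buys if $E[\omega\mid s_t,H_t]>ask_t$, sells if $E[\omega\mid s_t,H_t]<bid_t$, otherwise no trade. The public belief $\mu_t$ is the Bayesian posterior of $\mu_0$ given $H_t$; the limit belief is $\tilde{\mu}(\omega)=\lim_{t\to\infty}\mu_t(\omega)$ (almost sure limit). *)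

theory Defs
  imports "HOL-Probability.Probability"
begin

datatype act = Buy | Sell | NoTrade

text \<open>A market: value set Omega, signal set S, signal densities f(s|w) (w.r.t. Lebesgue
 measure), noise probability q, and the market makers' pricing rules ask/bid, which
 depend on the common prior and on the public history.  Histories are stored as lists
 with the most recent action first.\<close>
record mkt =
  Om :: "real set"
  Sg :: "real set"
  fd :: "real \<Rightarrow> real \<Rightarrow> real"   (* fd M s w = f(s | w) *)
  qn :: real
  askf :: "(real \<Rightarrow> real) \<Rightarrow> act list \<Rightarrow> real"
  bidf :: "(real \<Rightarrow> real) \<Rightarrow> act list \<Rightarrow> real"

definition full_support :: "real set \<Rightarrow> (real \<Rightarrow> real) \<Rightarrow> bool" where
  "full_support \<Omega> \<mu> \<longleftrightarrow> (\<forall>w\<in>\<Omega>. 0 < \<mu> w) \<and> (\<Sum>w\<in>\<Omega>. \<mu> w) = 1"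

definition post_mean :: "mkt \<Rightarrow> (real \<Rightarrow> real) \<Rightarrow> real \<Rightarrow> real" where
  "post_mean M \<mu> s = (\<Sum>w\<in>Om M. w * \<mu> w * fd M s w) / (\<Sum>w\<in>Om M. \<mu> w * fd M s w)"

definition informed_act :: "real \<Rightarrow> real \<Rightarrow> real \<Rightarrow> act" where
  "informed_act v a b = (if v > a then Buy else if v < b then Sell else NoTrade)"

definition inf_prob :: "mkt \<Rightarrow> (real \<Rightarrow> real) \<Rightarrow> real \<Rightarrow> real \<Rightarrow> act \<Rightarrow> real \<Rightarrow> real" where
  "inf_prob M \<mu> a b x w =
     (LINT s:{s\<in>Sg M. informed_act (post_mean M \<mu> s) a b = x}|lborel. fd M s w)"

definition act_prob :: "mkt \<Rightarrow> (real \<Rightarrow> real) \<Rightarrow> real \<Rightarrow> real \<Rightarrow> act \<Rightarrow> real \<Rightarrow> real" where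
  "act_prob M \<mu> a b x w = qn M / 3 + (1 - qn M) * inf_prob M \<mu> a b x w"

fun belief :: "mkt \<Rightarrow> (real \<Rightarrow> real) \<Rightarrow> act list \<Rightarrow> real \<Rightarrow> real" where
  "belief M \<mu>0 [] = \<mu>0"
| "belief M \<mu>0 (x # h) =
     (let \<mu> = belief M \<mu>0 h;
          p = act_prob M \<mu> (askf M \<mu>0 h) (bidf M \<mu>0 h) x
      in (\<lambda>w. \<mu> w * p w / (\<Sum>w'\<in>Om M. \<mu> w' * p w')))"

definition zero_profit :: "mkt \<Rightarrow> bool" where
  "zero_profit M \<longleftrightarrow> (\<forall>\<mu>0 h. full_support (Om M) \<mu>0 \<longrightarrow>
     (let \<mu> = belief M \<mu>0 h; pa = askf M \<mu>0 h; pb = bidf M \<mu>0 h;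
          P = (\<lambda>x w. act_prob M \<mu> pa pb x w)
      in pa = (\<Sum>w\<in>Om M. w * \<mu> w * P Buy w) / (\<Sum>w\<in>Om M. \<mu> w * P Buy w) \<and>
         pb = (\<Sum>w\<in>Om M. w * \<mu> w * P Sell w) / (\<Sum>w\<in>Om M. \<mu> w * P Sell w)))"

definition market_model :: "mkt \<Rightarrow> bool" where
  "market_model M \<longleftrightarrow> finite (Om M) \<and> Om M \<noteq> {} \<and> 0 < qn M \<and> qn M < 1 \<and>
     Sg M \<in> sets borel \<and>
     (\<forall>w\<in>Om M. (\<lambda>s. fd M s w) \<in> borel_measurable borel \<and> (\<forall>s\<in>Sg M. 0 < fd M s w) \<and>
        set_integrable lborel (Sg M) (\<lambda>s. fd M s w) \<and> (LINT s:Sg M|lborel. fd M s w) = 1) \<and>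
     zero_profit M"

text \<open>Per-date primitives given the true value w: (noise agent?, noise action), signal.
  Noise agent with probability q, noise action uniform on the three actions,
  signal with density f(. | w) on S.\<close>
definition date_meas :: "mkt \<Rightarrow> real \<Rightarrow> ((bool \<times> act) \<times> real) measure" where
  "date_meas M w =
     measure_pmf (pair_pmf (bernoulli_pmf (qn M)) (pmf_of_set {Buy, Sell, NoTrade}))
     \<Otimes>\<^sub>M density lborel (\<lambda>s. ennreal (indicator (Sg M) s * fd M s w))"

definition date_act :: "mkt \<Rightarrow> (real \<Rightarrow> real) \<Rightarrow> act list \<Rightarrow> (bool \<times> act) \<times> real \<Rightarrow> act" where
  "date_act M \<mu>0 h x = (case x of ((noise, na), s) \<Rightarrow>
     if noise then na
     else informed_act (post_mean M (belief M \<mu>0 h) s) (askf M \<mu>0 h) (bidf M \<mu>0 h))"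

fun hist :: "mkt \<Rightarrow> (real \<Rightarrow> real) \<Rightarrow> ((bool \<times> act) \<times> real) stream \<Rightarrow> nat \<Rightarrow> act list" where
  "hist M \<mu>0 xs 0 = []"
| "hist M \<mu>0 xs (Suc n) = date_act M \<mu>0 (hist M \<mu>0 xs n) (xs !! n) # hist M \<mu>0 xs n"

text \<open>pub_belief M mu0 xs n = mu_{n+1}, the public belief after n actions.\<close>
definition pub_belief :: "mkt \<Rightarrow> (real \<Rightarrow> real) \<Rightarrow> ((bool \<times> act) \<times> real) stream \<Rightarrow> nat \<Rightarrow> real \<Rightarrow> real" where
  "pub_belief M \<mu>0 xs n = belief M \<mu>0 (hist M \<mu>0 xs n)"

end

theory Submission
  imports Defs
begin

lemma inf_prob_nonneg:
  assumes "market_model M" "v \<in> Om M"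
  shows "0 \<le> inf_prob M \<mu> a b x v"
  unfolding inf_prob_def set_lebesgue_integral_def
  using assms unfolding market_model_def
  by (intro integral_nonneg_AE AE_I2) (auto simp: indicator_def less_imp_le)

lemma act_prob_pos:
  assumes "market_model M" "v \<in> Om M"
  shows "qn M / 3 \<le> act_prob M \<mu> a b x v" "0 < act_prob M \<mu> a b x v"
proof -
  have "0 \<le> (1 - qn M) * inf_prob M \<mu> a b x v"
    using assms inf_prob_nonneg[OF assms] unfolding market_model_def by auto
  then show "qn M / 3 \<le> act_prob M \<mu> a b x v" unfolding act_prob_def by simp
  then show "0 < act_prob M \<mu> a b x v" using assms unfolding market_model_def by linarith
qed

lemma belief_props:
  assumes M: "market_model M" and fs: "full_support (Om M) \<mu>0"
  shows "(\<forall>u\<in>Om M. 0 < belief M \<mu>0 h u) \<and> (\<Sum>u\<in>Om M. belief M \<mu>0 h u) = 1"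
proof (induction h)
  case Nil
  then show ?case using fs by (simp add: full_support_def)
next
  case (Cons x h)
  define \<mu> where "\<mu> = belief M \<mu>0 h"
  define p where "p = act_prob M \<mu> (askf M \<mu>0 h) (bidf M \<mu>0 h) x"
  have fin: "finite (Om M)" "Om M \<noteq> {}" using M by (auto simp: market_model_def)
  have pp: "\<And>u. u \<in> Om M \<Longrightarrow> 0 < \<mu> u * p u"
    using Cons act_prob_pos[OF M] unfolding \<mu>_def p_def by auto
  have Z: "0 < (\<Sum>w'\<in>Om M. \<mu> w' * p w')"
    using fin pp by (intro sum_pos) auto
  have eq: "belief M \<mu>0 (x # h) = (\<lambda>w. \<mu> w * p w / (\<Sum>w'\<in>Om M. \<mu> w' * p w'))"
    by (simp add: \<mu>_def p_def Let_def)
  show ?case unfolding eq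
    using Z pp by (auto simp: sum_divide_distrib[symmetric])
qed


definition sigd :: "mkt \<Rightarrow> real \<Rightarrow> real measure" where
  "sigd M v = density lborel (\<lambda>s. ennreal (indicator (Sg M) s * fd M s v))"

lemma pm_meas:
  assumes M: "market_model M"
  shows "(\<lambda>s. post_mean M \<mu> s) \<in> borel_measurable borel"
proof -
  have f: "\<And>w. w \<in> Om M \<Longrightarrow> (\<lambda>s. fd M s w) \<in> borel_measurable borel"
    using M by (auto simp: market_model_def)
  have 1: "(\<lambda>s. \<Sum>w\<in>Om M. w * \<mu> w * fd M s w) \<in> borel_measurable borel"
    using f by (intro borel_measurable_sum) auto
  have 2: "(\<lambda>s. \<Sum>w\<in>Om M. \<mu> w * fd M s w) \<in> borel_measurable borel"
    using f by (intro borel_measurable_sum) auto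
  show ?thesis unfolding post_mean_def using 1 2 by (rule borel_measurable_divide)
qed

lemma ia_meas0: "(\<lambda>v::real. informed_act v A B) \<in> borel \<rightarrow>\<^sub>M count_space UNIV"
  unfolding informed_act_def by measurable

lemma ia_meas:
  assumes M: "market_model M"
  shows "(\<lambda>s. informed_act (post_mean M \<mu> s) A B) \<in> borel \<rightarrow>\<^sub>M count_space UNIV"
  using measurable_compose[OF pm_meas[OF M] ia_meas0] .

lemma ia_set_sets:
  assumes M: "market_model M"
  shows "{s. informed_act (post_mean M \<mu> s) A B = a} \<in> sets borel"
proof -
  have "{s. informed_act (post_mean M \<mu> s) A B = a} = (\<lambda>s. informed_act (post_mean M \<mu> s) A B) -` {a} \<inter> space borel"
    by auto
  also have "\<dots> \<in> sets borel" using ia_meas[OF M] by (rule measurable_sets) simp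
  finally show ?thesis .
qed

lemma emeasure_sigd:
  assumes M: "market_model M" and v: "v \<in> Om M" and X: "X \<in> sets borel"
  shows "emeasure (sigd M v) X = ennreal (LINT s:(X \<inter> Sg M)|lborel. fd M s v)"
proof -
  have Sg: "Sg M \<in> sets borel" and fm: "(\<lambda>s. fd M s v) \<in> borel_measurable borel"
    and fp: "\<forall>s\<in>Sg M. 0 < fd M s v" and fi: "set_integrable lborel (Sg M) (\<lambda>s. fd M s v)"
    using M v by (auto simp: market_model_def)
  have XS: "X \<inter> Sg M \<in> sets lborel" using X Sg by simp
  have fi2: "set_integrable lborel (X \<inter> Sg M) (\<lambda>s. fd M s v)"
    by (rule set_integrable_subset[OF fi XS]) auto
  have "emeasure (sigd M v) X = (\<integral>\<^sup>+s. ennreal (indicator (Sg M) s * fd M s v) * indicator X s \<partial>lborel)"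
    unfolding sigd_def using X Sg fm by (subst emeasure_density) auto
  also have "\<dots> = (\<integral>\<^sup>+s. ennreal (indicator (X \<inter> Sg M) s * fd M s v) \<partial>lborel)"
    by (intro nn_integral_cong) (auto simp: indicator_def)
  also have "\<dots> = ennreal (LINT s:(X \<inter> Sg M)|lborel. fd M s v)"
    unfolding set_lebesgue_integral_def real_scaleR_def
    using fi2 fp unfolding set_integrable_def real_scaleR_def
    by (intro nn_integral_eq_integral) (auto simp: indicator_def less_imp_le)
  finally show ?thesis .
qed

lemma sigd_prob:
  assumes M: "market_model M" and v: "v \<in> Om M"
  shows "prob_space (sigd M v)"
proof
  have "emeasure (sigd M v) UNIV = ennreal (LINT s:(Sg M)|lborel. fd M s v)"
    using emeasure_sigd[OF M v, of UNIV] by simp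
  also have "\<dots> = 1" using M v by (simp add: market_model_def)
  finally show "emeasure (sigd M v) (space (sigd M v)) = 1" by (simp add: sigd_def)
qed

lemma emeasure_sigd_ia:
  assumes M: "market_model M" and v: "v \<in> Om M"
  shows "emeasure (sigd M v) {s. informed_act (post_mean M \<mu> s) A B = a} = ennreal (inf_prob M \<mu> A B a v)"
  unfolding inf_prob_def
  by (subst emeasure_sigd[OF M v ia_set_sets[OF M]]) (simp add: Int_def conj_commute)

lemma act_UNIV: "(UNIV :: act set) = {Buy, Sell, NoTrade}"
  using act.exhaust by auto

lemma sum_inf_prob:
  assumes M: "market_model M" and v: "v \<in> Om M"
  shows "(\<Sum>a\<in>{Buy, Sell, NoTrade}. inf_prob M \<mu> A B a v) = 1"
proof -
  interpret P: prob_space "sigd M v" by (rule sigd_prob[OF M v])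
  let ?F = "\<lambda>a. {s. informed_act (post_mean M \<mu> s) A B = a}"
  have "ennreal (\<Sum>a\<in>{Buy, Sell, NoTrade}. inf_prob M \<mu> A B a v)
      = (\<Sum>a\<in>{Buy, Sell, NoTrade}. ennreal (inf_prob M \<mu> A B a v))"
    using inf_prob_nonneg[OF M v] by (intro sum_ennreal[symmetric]) auto
  also have "\<dots> = (\<Sum>a\<in>UNIV. emeasure (sigd M v) (?F a))"
    unfolding act_UNIV using emeasure_sigd_ia[OF M v] by simp
  also have "\<dots> = emeasure (sigd M v) (\<Union>a\<in>UNIV. ?F a)"
    using ia_set_sets[OF M]
    by (intro sum_emeasure) (auto simp: disjoint_family_on_def sigd_def act_UNIV)
  also have "(\<Union>a\<in>UNIV. ?F a) = space (sigd M v)" by (auto simp: sigd_def)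
  also have "emeasure (sigd M v) (space (sigd M v)) = 1" by (rule P.emeasure_space_1)
  finally have "ennreal (\<Sum>a\<in>{Buy, Sell, NoTrade}. inf_prob M \<mu> A B a v) = 1" .
  then show ?thesis by simp
qed


definition dact :: "mkt \<Rightarrow> (real \<Rightarrow> real) \<Rightarrow> real \<Rightarrow> real \<Rightarrow> (bool \<times> act) \<times> real \<Rightarrow> act" where
  "dact M \<mu> A B x = (case x of ((noise, na), s) \<Rightarrow>
     if noise then na else informed_act (post_mean M \<mu> s) A B)"

lemma date_act_dact: "date_act M \<mu>0 h = dact M (belief M \<mu>0 h) (askf M \<mu>0 h) (bidf M \<mu>0 h)"
  by (simp add: date_act_def dact_def fun_eq_iff)

abbreviation "PP M \<equiv> pair_pmf (bernoulli_pmf (qn M)) (pmf_of_set {Buy, Sell, NoTrade})"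

lemma date_meas_eq: "date_meas M v = measure_pmf (PP M) \<Otimes>\<^sub>M sigd M v"
  by (simp add: date_meas_def sigd_def)

lemma space_date_meas[simp]: "space (date_meas M v) = UNIV"
  by (simp add: date_meas_eq space_pair_measure sigd_def)

lemma dact_meas:
  assumes M: "market_model M"
  shows "dact M \<mu> A B \<in> date_meas M v \<rightarrow>\<^sub>M count_space UNIV"
proof -
  have e: "dact M \<mu> A B = (\<lambda>x. if fst (fst x) then snd (fst x) else informed_act (post_mean M \<mu> (snd x)) A B)"
    by (auto simp: dact_def fun_eq_iff split: prod.splits)
  have g: "(\<lambda>x. informed_act (post_mean M \<mu> (snd x)) A B) \<in> date_meas M v \<rightarrow>\<^sub>M count_space UNIV"
    unfolding date_meas_eq
    by (rule measurable_compose[OF measurable_snd]) (simp add: sigd_def ia_meas[OF M])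
  have f1: "(\<lambda>x. fst (fst x)) \<in> date_meas M v \<rightarrow>\<^sub>M count_space UNIV"
    unfolding date_meas_eq
    by (rule measurable_compose[OF measurable_fst]) simp
  have f2: "(\<lambda>x. snd (fst x)) \<in> date_meas M v \<rightarrow>\<^sub>M count_space UNIV"
    unfolding date_meas_eq
    by (rule measurable_compose[OF measurable_fst]) simp
  have p: "Measurable.pred (date_meas M v) (\<lambda>x. fst (fst x))"
    using f1 by (simp add: pred_def measurable_count_space_eq2)
  show ?thesis unfolding e
    by (rule measurable_If[OF f2 g p[unfolded pred_def]])
qed

lemma act_dist:
  assumes M: "market_model M" and v: "v \<in> Om M"
  shows "emeasure (date_meas M v) {x. dact M \<mu> A B x = a} = ennreal (act_prob M \<mu> A B a v)"
proof -
  interpret N: prob_space "sigd M v" by (rule sigd_prob[OF M v])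
  have q: "0 < qn M" "qn M < 1" using M by (auto simp: market_model_def)
  define G where "G y = (if fst y then (if snd y = a then 1 else 0) else inf_prob M \<mu> A B a v)" for y
  have X: "{x. dact M \<mu> A B x = a} \<in> sets (measure_pmf (PP M) \<Otimes>\<^sub>M sigd M v)"
  proof -
    have "{x. dact M \<mu> A B x = a} = dact M \<mu> A B -` {a} \<inter> space (date_meas M v)" by auto
    also have "\<dots> \<in> sets (date_meas M v)" using dact_meas[OF M] by (rule measurable_sets) simp
    finally show ?thesis by (simp add: date_meas_eq)
  qed
  have sl: "emeasure (sigd M v) (Pair y -` {x. dact M \<mu> A B x = a}) = ennreal (G y)" for y
  proof (cases y)
    case (Pair b na)
    show ?thesis
    proof (cases b)
      case True
      then show ?thesis using Pair N.emeasure_space_1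
        by (auto simp: G_def dact_def sigd_def)
    next
      case False
      have "Pair y -` {x. dact M \<mu> A B x = a} = {s. informed_act (post_mean M \<mu> s) A B = a}"
        using Pair False by (auto simp: dact_def)
      then show ?thesis using Pair False emeasure_sigd_ia[OF M v] by (simp add: G_def)
    qed
  qed
  have "emeasure (date_meas M v) {x. dact M \<mu> A B x = a} = (\<integral>\<^sup>+y. ennreal (G y) \<partial>measure_pmf (PP M))"
    unfolding date_meas_eq N.emeasure_pair_measure_alt[OF X] sl ..
  also have "\<dots> = ennreal (\<integral>y. G y \<partial>measure_pmf (PP M))"
    using inf_prob_nonneg[OF M v]
    by (intro nn_integral_eq_integral integrable_measure_pmf_finite) (auto simp: G_def)
  also have "(\<integral>y. G y \<partial>measure_pmf (PP M)) = (\<Sum>y\<in>UNIV \<times> {Buy, Sell, NoTrade}. pmf (PP M) y *\<^sub>R G y)"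
    by (rule integral_measure_pmf) auto
  also have "\<dots> = act_prob M \<mu> A B a v"
    using q
    by (cases a) (simp_all add: act_prob_def G_def UNIV_bool pmf_pair field_simps)
  finally show ?thesis .
qed


lemma dact_set_sets:
  assumes M: "market_model M"
  shows "{x. dact M \<mu> A B x = a} \<in> sets (date_meas M v)"
proof -
  have "{x. dact M \<mu> A B x = a} = dact M \<mu> A B -` {a} \<inter> space (date_meas M v)" by auto
  also have "\<dots> \<in> sets (date_meas M v)" using dact_meas[OF M] by (rule measurable_sets) simp
  finally show ?thesis .
qed

lemma nn_int_act:
  assumes M: "market_model M" and v: "v \<in> Om M"
  shows "(\<integral>\<^sup>+x. f (dact M \<mu> A B x) \<partial>date_meas M v)
       = (\<Sum>a\<in>{Buy, Sell, NoTrade}. f a * ennreal (act_prob M \<mu> A B a v))"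
proof -
  have eq: "f (dact M \<mu> A B x) = (\<Sum>a\<in>{Buy, Sell, NoTrade}. f a * indicator {x. dact M \<mu> A B x = a} x)" for x
    by (cases "dact M \<mu> A B x") (auto simp: indicator_def)
  have "(\<integral>\<^sup>+x. f (dact M \<mu> A B x) \<partial>date_meas M v)
      = (\<Sum>a\<in>{Buy, Sell, NoTrade}. \<integral>\<^sup>+x. f a * indicator {x. dact M \<mu> A B x = a} x \<partial>date_meas M v)"
    unfolding eq using dact_set_sets[OF M]
    by (intro nn_integral_sum) auto
  also have "\<dots> = (\<Sum>a\<in>{Buy, Sell, NoTrade}. f a * ennreal (act_prob M \<mu> A B a v))"
    using dact_set_sets[OF M] act_dist[OF M v]
    by (intro sum.cong refl) (simp add: nn_integral_cmult_indicator)
  finally show ?thesis .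
qed

fun ext :: "mkt \<Rightarrow> (real \<Rightarrow> real) \<Rightarrow> act list \<Rightarrow> ((bool \<times> act) \<times> real) stream \<Rightarrow> nat \<Rightarrow> act list" where
  "ext M \<mu>0 h X 0 = h"
| "ext M \<mu>0 h X (Suc n) = ext M \<mu>0 (date_act M \<mu>0 h (shd X) # h) (stl X) n"

lemma ext_Suc': "ext M \<mu>0 h X (Suc n) = date_act M \<mu>0 (ext M \<mu>0 h X n) (X !! n) # ext M \<mu>0 h X n"
  by (induction n arbitrary: h X) auto

lemma hist_ext: "hist M \<mu>0 xs n = ext M \<mu>0 [] xs n"
  proof (induction n)
  case 0 then show ?case by simp
next
  case (Suc n) then show ?case by (simp only: hist.simps ext_Suc')
qed

definition RR :: "mkt \<Rightarrow> (real \<Rightarrow> real) \<Rightarrow> real \<Rightarrow> real \<Rightarrow> act list \<Rightarrow> ennreal" where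
  "RR M \<mu>0 ws w h = ennreal (belief M \<mu>0 h ws / belief M \<mu>0 h w)"

lemma RR_meas:
  assumes M: "market_model M"
  shows "(\<lambda>X. RR M \<mu>0 ws w (ext M \<mu>0 h X n)) \<in> borel_measurable (stream_space (date_meas M v))"
proof (induction n arbitrary: h)
  case 0
  then show ?case by simp
next
  case (Suc n)
  have g: "(\<lambda>X. date_act M \<mu>0 h (shd X)) \<in> stream_space (date_meas M v) \<rightarrow>\<^sub>M count_space UNIV"
    unfolding date_act_dact
    by (rule measurable_compose[OF measurable_shd dact_meas[OF M]])
  have f: "(\<lambda>X. RR M \<mu>0 ws w (ext M \<mu>0 (a # h) (stl X) n)) \<in> borel_measurable (stream_space (date_meas M v))" for a
    by (rule measurable_compose[OF measurable_stl Suc.IH])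
  have c: "countable (UNIV :: act set)" by (simp add: act_UNIV)
  show ?case
    using measurable_compose_countable'[where f="\<lambda>a X. RR M \<mu>0 ws w (ext M \<mu>0 (a # h) (stl X) n)",
        OF f g c] by simp
qed


lemma sum_act_prob:
  assumes M: "market_model M" and v: "v \<in> Om M"
  shows "(\<Sum>a\<in>{Buy, Sell, NoTrade}. act_prob M \<mu> A B a v) = 1"
proof -
  have "(\<Sum>a\<in>{Buy, Sell, NoTrade}. act_prob M \<mu> A B a v)
      = qn M + (1 - qn M) * (\<Sum>a\<in>{Buy, Sell, NoTrade}. inf_prob M \<mu> A B a v)"
    unfolding act_prob_def by (simp add: distrib_left)
  then show ?thesis using sum_inf_prob[OF M v, of \<mu> A B] by simp
qed

lemma step_bound:
  assumes M: "market_model M" and fs: "full_support (Om M) \<mu>0"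
    and ws: "ws \<in> Om M" and w: "w \<in> Om M"
  shows "(\<integral>\<^sup>+x. RR M \<mu>0 ws w (date_act M \<mu>0 h x # h) \<partial>date_meas M w) = RR M \<mu>0 ws w h"
proof -
  define \<mu> where "\<mu> = belief M \<mu>0 h"
  define A where "A = askf M \<mu>0 h"
  define B where "B = bidf M \<mu>0 h"
  define p where "p a u = act_prob M \<mu> A B a u" for a u
  define r where "r = \<mu> ws / \<mu> w"
  have fin: "finite (Om M)" "Om M \<noteq> {}" using M by (auto simp: market_model_def)
  have mpos: "\<And>u. u \<in> Om M \<Longrightarrow> 0 < \<mu> u" using belief_props[OF M fs] by (auto simp: \<mu>_def)
  have ppos: "\<And>a u. u \<in> Om M \<Longrightarrow> 0 < p a u" unfolding p_def using act_prob_pos[OF M] by auto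
  have Zpos: "0 < (\<Sum>w'\<in>Om M. \<mu> w' * p a w')" for a
    using fin mpos ppos by (intro sum_pos) auto
  have RRa: "RR M \<mu>0 ws w (a # h) = ennreal (r * p a ws / p a w)" for a
  proof -
    have "belief M \<mu>0 (a # h) = (\<lambda>u. \<mu> u * p a u / (\<Sum>w'\<in>Om M. \<mu> w' * p a w'))"
      by (simp add: \<mu>_def p_def A_def B_def Let_def)
    then have "belief M \<mu>0 (a # h) ws / belief M \<mu>0 (a # h) w
        = (\<mu> ws * p a ws / (\<Sum>w'\<in>Om M. \<mu> w' * p a w')) / (\<mu> w * p a w / (\<Sum>w'\<in>Om M. \<mu> w' * p a w'))"
      by simp
    also have "\<dots> = (\<mu> ws * p a ws) / (\<mu> w * p a w)"
      using Zpos[of a] by (simp only: divide_divide_eq_left divide_divide_eq_right) auto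
    also have "\<dots> = r * p a ws / p a w"
      unfolding r_def by (simp only: times_divide_eq_left times_divide_eq_right divide_divide_eq_left mult.commute)
    finally show ?thesis unfolding RR_def by simp
  qed
  have "(\<integral>\<^sup>+x. RR M \<mu>0 ws w (date_act M \<mu>0 h x # h) \<partial>date_meas M w)
      = (\<integral>\<^sup>+x. (\<lambda>a. RR M \<mu>0 ws w (a # h)) (dact M \<mu> A B x) \<partial>date_meas M w)"
    by (simp add: date_act_dact \<mu>_def A_def B_def)
  also have "\<dots> = (\<Sum>a\<in>{Buy, Sell, NoTrade}. RR M \<mu>0 ws w (a # h) * ennreal (p a w))"
    unfolding p_def using nn_int_act[OF M w, of "\<lambda>a. RR M \<mu>0 ws w (a # h)"] by simp
  also have "\<dots> = (\<Sum>a\<in>{Buy, Sell, NoTrade}. ennreal (r * p a ws))"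
  proof (intro sum.cong refl)
    fix a
    have "0 \<le> r * p a ws / p a w" "0 \<le> p a w"
      using mpos[OF ws] mpos[OF w] ppos[OF ws, of a] ppos[OF w, of a] unfolding r_def
      by (auto intro!: divide_nonneg_pos mult_nonneg_nonneg)
    then show "RR M \<mu>0 ws w (a # h) * ennreal (p a w) = ennreal (r * p a ws)"
      unfolding RRa using ppos[OF w, of a] by (simp add: ennreal_mult'[symmetric])
  qed
  also have "\<dots> = ennreal (\<Sum>a\<in>{Buy, Sell, NoTrade}. r * p a ws)"
    using mpos[OF ws] mpos[OF w] ppos[OF ws]
    by (intro sum_ennreal) (auto simp: r_def intro!: divide_nonneg_pos mult_nonneg_nonneg less_imp_le)
  also have "(\<Sum>a\<in>{Buy, Sell, NoTrade}. r * p a ws) = r"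
    using sum_act_prob[OF M ws, of \<mu> A B] unfolding p_def sum_distrib_left[symmetric] by simp
  also have "ennreal r = RR M \<mu>0 ws w h" by (simp add: RR_def r_def \<mu>_def)
  finally show ?thesis .
qed

lemma main_bound:
  assumes M: "market_model M" and fs: "full_support (Om M) \<mu>0"
    and ws: "ws \<in> Om M" and w: "w \<in> Om M"
  shows "(\<integral>\<^sup>+X. RR M \<mu>0 ws w (ext M \<mu>0 h X n) \<partial>stream_space (date_meas M w)) \<le> RR M \<mu>0 ws w h"
proof (induction n arbitrary: h)
  case 0
  interpret D: prob_space "date_meas M w" unfolding date_meas_eq
    using sigd_prob[OF M w] by (intro prob_space_pair) (auto simp: prob_space_measure_pmf)
  interpret S: prob_space "stream_space (date_meas M w)" by (rule D.prob_space_stream_space)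
  show ?case by (simp add: S.emeasure_space_1)
next
  case (Suc n)
  interpret D: prob_space "date_meas M w" unfolding date_meas_eq
    using sigd_prob[OF M w] by (intro prob_space_pair) (auto simp: prob_space_measure_pmf)
  have "(\<integral>\<^sup>+X. RR M \<mu>0 ws w (ext M \<mu>0 h X (Suc n)) \<partial>stream_space (date_meas M w))
      = (\<integral>\<^sup>+x. (\<integral>\<^sup>+X. RR M \<mu>0 ws w (ext M \<mu>0 h (x ## X) (Suc n)) \<partial>stream_space (date_meas M w)) \<partial>date_meas M w)"
    by (rule D.nn_integral_stream_space[OF RR_meas[OF M]])
  also have "\<dots> = (\<integral>\<^sup>+x. (\<integral>\<^sup>+X. RR M \<mu>0 ws w (ext M \<mu>0 (date_act M \<mu>0 h x # h) X n) \<partial>stream_space (date_meas M w)) \<partial>date_meas M w)"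
    by simp
  also have "\<dots> \<le> (\<integral>\<^sup>+x. RR M \<mu>0 ws w (date_act M \<mu>0 h x # h) \<partial>date_meas M w)"
    by (intro nn_integral_mono Suc.IH)
  also have "\<dots> = RR M \<mu>0 ws w h" by (rule step_bound[OF M fs ws w])
  finally show ?case .
qed


theorem lemma5:
  fixes M :: mkt and \<mu>0 :: "real \<Rightarrow> real" and w_star w :: real
  assumes "market_model M"
    and "full_support (Om M) \<mu>0"
    and "w_star \<in> Om M"
    and "w \<in> Om M"
    and "\<forall>\<mu>. full_support (Om M) \<mu> \<longrightarrow>
           (\<forall>v\<in>Om M. AE xs in stream_space (date_meas M v).
              \<forall>u\<in>Om M. (\<lambda>n. pub_belief M \<mu> xs n u) \<longlonglongrightarrow> 0 \<or>
                        (\<lambda>n. pub_belief M \<mu> xs n u) \<longlonglongrightarrow> 1)"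
  shows "AE xs in stream_space (date_meas M w).
           (\<lambda>n. pub_belief M \<mu>0 xs n w_star) \<longlonglongrightarrow> 1 \<longrightarrow> w_star = w"
proof -
  note M = assms(1) and fs = assms(2) and ws = assms(3) and w = assms(4)
  interpret D: prob_space "date_meas M w" unfolding date_meas_eq
    using sigd_prob[OF M w] by (intro prob_space_pair) (auto simp: prob_space_measure_pmf)
  interpret S: prob_space "stream_space (date_meas M w)" by (rule D.prob_space_stream_space)
  define R where "R n X = RR M \<mu>0 w_star w (hist M \<mu>0 X n)" for n X
  have Rm: "R n \<in> borel_measurable (stream_space (date_meas M w))" for n
    unfolding R_def hist_ext by (rule RR_meas[OF M])
  have Rb: "(\<integral>\<^sup>+X. R n X \<partial>stream_space (date_meas M w)) \<le> RR M \<mu>0 w_star w []" for n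
    unfolding R_def hist_ext by (rule main_bound[OF M fs ws w])
  have "(\<integral>\<^sup>+X. liminf (\<lambda>n. R n X) \<partial>stream_space (date_meas M w))
      \<le> liminf (\<lambda>n. \<integral>\<^sup>+X. R n X \<partial>stream_space (date_meas M w))"
    by (rule nn_integral_liminf[OF Rm])
  also have "\<dots> \<le> RR M \<mu>0 w_star w []"
    using Rb by (intro Liminf_le) auto
  also have "\<dots> < \<infinity>" by (simp add: RR_def)
  finally have fin: "(\<integral>\<^sup>+X. liminf (\<lambda>n. R n X) \<partial>stream_space (date_meas M w)) \<noteq> \<infinity>" by simp
  have lm: "(\<lambda>X. liminf (\<lambda>n. R n X)) \<in> borel_measurable (stream_space (date_meas M w))"
    using Rm by (rule borel_measurable_liminf)
  have ae: "AE X in stream_space (date_meas M w). liminf (\<lambda>n. R n X) \<noteq> \<infinity>"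
    by (rule nn_integral_PInf_AE[OF lm fin])
  show ?thesis
  proof (rule eventually_mono[OF ae], intro impI)
    fix X assume li: "liminf (\<lambda>n. R n X) \<noteq> \<infinity>"
      and conv: "(\<lambda>n. pub_belief M \<mu>0 X n w_star) \<longlonglongrightarrow> 1"
    show "w_star = w"
    proof (rule ccontr)
      assume ne: "w_star \<noteq> w"
      define b where "b n u = pub_belief M \<mu>0 X n u" for n u
      have fin: "finite (Om M)" using M by (simp add: market_model_def)
      have bpos: "0 < b n u" if "u \<in> Om M" for n u
        using belief_props[OF M fs] that by (simp add: b_def pub_belief_def)
      have bsum: "b n w_star + b n w \<le> 1" for n
      proof -
        have "b n w_star + b n w = (\<Sum>u\<in>{w_star, w}. b n u)" using ne by simp
        also have "\<dots> \<le> (\<Sum>u\<in>Om M. b n u)"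
          using fin ws w bpos by (intro sum_mono2) (auto intro: less_imp_le)
        also have "\<dots> = 1" using belief_props[OF M fs] by (simp add: b_def pub_belief_def)
        finally show ?thesis .
      qed
      have c1: "(\<lambda>n. b n w_star) \<longlonglongrightarrow> 1" using conv by (simp add: b_def)
      have c0: "(\<lambda>n. b n w) \<longlonglongrightarrow> 0"
      proof (rule tendsto_sandwich[of "\<lambda>_. 0" _ _ "\<lambda>n. 1 - b n w_star"])
        show "\<forall>\<^sub>F n in sequentially. 0 \<le> b n w" using bpos[OF w] by (intro always_eventually allI less_imp_le)
        show "\<forall>\<^sub>F n in sequentially. b n w \<le> 1 - b n w_star" using bsum by (intro always_eventually allI) (auto simp: algebra_simps)
        show "(\<lambda>n. 0) \<longlonglongrightarrow> (0::real)" by simp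
        show "(\<lambda>n. 1 - b n w_star) \<longlonglongrightarrow> 0" using tendsto_diff[OF tendsto_const c1, of 1] by simp
      qed
      have "filterlim (\<lambda>n. b n w_star / b n w) at_top sequentially"
        by (rule LIM_at_top_divide[OF c1 _ c0]) (use bpos[OF w] in auto)
      then have "(\<lambda>n. ennreal (b n w_star / b n w)) \<longlonglongrightarrow> top"
        by (simp add: ennreal_tendsto_top_eq_at_top)
      then have "(\<lambda>n. R n X) \<longlonglongrightarrow> top"
        by (simp add: R_def RR_def b_def pub_belief_def)
      then have "liminf (\<lambda>n. R n X) = top"
        by (intro lim_imp_Liminf) auto
      then show False using li by simp
    qed
  qed
qed

end
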